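(* Let $P_0,\dots,P_n$ be a transformation sequence constructed by using the transformation rules R1–R9 (defined in the context). Let $M$ be a mode for $P_0\cup\mathit{Defs}_n$ such that (i) $P_0\cup\mathit{Defs}_n$ is safe w.r.t. $M$ and (ii) the applications of the unfolding, head generalization, and case split rules during the construction of $P_0,\dots,P_n$ are safe w.r.t. $M$. Then, for $k=0,\dots,n$, the program $P_k$ is safe w.r.t. $M$.
   Context: Syntax. Predicate symbols $\mathit{true}$, $=$, $\neq$ are basic, all others non-basic. Basic atoms: $\mathit{true}$, $t_1=t_2$, $t_1\neq t_2$ (disequation); non-basic atoms: $p(t_1,\dots,t_m)$, $p$ non-basic. A goal is a conjunction of atoms ("," associative, neutral element $\mathit{true}$). A clause $C$ is $A\leftarrow G$ with non-basic head $hd(C)$ and body $bd(C)$; a program is a set of clauses. $p$ depends on $q$ in $P$ iff $(p,q)$ is in the transitive closure of "some clause for $p$ in $P$ has $q$ in its body"; $p$ depends on clause $C$ iff $C$ is a clause for $p$ or for some $q$ on which $p$ depends. mgu's are relevant and idempotent; renamed apart clauses have fresh variables. A variable $X$ is a local variable of goal $G$ in clause $H\leftarrow G_1,G,G_2$ iff $X\in vars(G)-vars(H,G_1,G_2)$. Modes. A mode for non-basic $p$ of arity $h$ is $p(m_1,\dots,m_h)$, $m_i\in\{+,?\}$; $t_i$ is an input argument iff $m_i=+$, variables in input arguments are input variables. A mode for a program contains exactly one mode per non-basic predicate occurring in it. A clause $C$ is safe w.r.t. $M$ iff every variable of every disequation $t_1\neq t_2$ in $bd(C)$ is an input variable of $hd(C)$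 or a local variable of $t_1\neq t_2$ in $C$; a program is safe iff all its clauses are. Transformation rules. In a transformation sequence $P_0,\dots,P_n$ each $P_{k+1}$ is derived from $P_k$ by one of R1–R9; $\mathit{Defs}_k$ is the set of clauses introduced by R1 while constructing $P_0,\dots,P_k$. R1 (Definition introduction): add clauses $\mathit{newp}(X_1,\dots,X_h)\leftarrow\mathit{Body}_j$ ($j=1..m$, $m\ge1$), $\mathit{newp}$ non-basic not in $P_0,\dots,P_k$, $X_i$ distinct each occurring in some $\mathit{Body}_j$, non-basic predicates of $\mathit{Body}_j$ occurring in $P_0$, each $\mathit{Body}_j$ containing a non-basic atom. R2 (Definition elimination w.r.t. $p$): $P_{k+1}=\{C\in P_k\mid p$ depends on $C\}$. R3 (Unfolding): for a renamed apart $C: H\leftarrow G_1,A,G_2$ in $P_k$ ($A$ non-basic) and the clauses $C_1,\dots,C_m$ of $P_k$ whose heads unify with $A$ via mgu's $\vartheta_i$, replace $C$ by the clauses $(H\leftarrow G_1,bd(C_i),G_2)\vartheta_i$. Safe w.r.t. $M$ iff for all $i$, every disequation $d$ in $bd(C_i)$ and every variable $X$ of $d\vartheta_i$, $X$ is an input variable of $H\vartheta_i$ or a local variable of $d$ in $C_i$. R4 (Folding): for renamed clauses $C_i: H\leftarrow G_1,\mathit{Body}_i\vartheta,G_2$ in $P_k$ and all clauses $\mathit{newp}(X_1,\dots,X_h)\leftarrow\mathit{Body}_i$ ($i=1..m$) of $\mathit{Defs}_k$ with head predicate $\mathit{newp}$, such that for each $i$ and each variable $X$ of $\mathit{Body}_i$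 not among $X_1,\dots,X_h$, $X\vartheta$ is a variable not occurring in $(H,G_1,G_2)$ nor in $Y\vartheta$ for any variable $Y\neq X$ of $\mathit{Body}_i$: replace $C_1,\dots,C_m$ by $H\leftarrow G_1,\mathit{newp}(X_1,\dots,X_h)\vartheta,G_2$. R5 (Subsumption): delete a clause $(H\leftarrow G_1,G_2)\vartheta$ of $P_k$ when $H\leftarrow G_1$ is another clause of $P_k$. R6 (Head generalization): replace $H\{X/t\}\leftarrow\mathit{Body}$ ($X$ occurs in $H$ and not in the clause) by $H\leftarrow X=t,\mathit{Body}$; safe iff $X$ is not an input variable of $H$. R7 (Case split): replace $C: H\leftarrow\mathit{Body}$, for $X\notin vars(t)$, by $(H\leftarrow\mathit{Body})\{X/t\}$ and $H\leftarrow X\neq t,\mathit{Body}$; safe iff $X$ is an input variable of $H$, $X\notin vars(t)$, and each variable of $t$ is an input variable of $H$ or does not occur in $C$. R8 (Equation elimination): $H\leftarrow G_1,t_1=t_2,G_2$ becomes $(H\leftarrow G_1,G_2)\vartheta$ if $\vartheta$ is an mgu of $t_1,t_2$, and is deleted if they are not unifiable. R9 (Disequation replacement): (1) drop $t_1\neq t_2$ from a body when $t_1,t_2$ are not unifiable; (2) replace $H\leftarrow G_1,f(t_1,\dots,t_m)\neq f(u_1,\dots,u_m),G_2$ by the $m$ clauses $H\leftarrow G_1,t_i\neq u_i,G_2$; (3) delete a clause with $X\neq X$ in its body; (4) rewrite $t\neq X$ as $X\neq t$; (5) replace $H\leftarrow G_1,X\neq t_1,G_2,X\neq t_2,G_3$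 by $H\leftarrow G_1,X\neq t_1,G_2,G_3$ when a bijection $\rho$ from the local variables of $X\neq t_1$ onto those of $X\neq t_2$ in the clause satisfies $t_1\rho=t_2$. *)

theory Defs
  imports Main
begin

text \<open>Variables are natural numbers (an infinite supply, needed for renaming apart);
  function and predicate symbols are strings.  Non-basic predicate symbols are exactly
  the strings; the basic predicates are the constructors Eq and Neq of atom, and the
  basic atom true is the neutral element of conjunction, i.e. the empty goal.\<close>

datatype trm = V nat | F string "trm list"

datatype atom = Eq trm trm | Neq trm trm | At string "trm list"

type_synonym goal = "atom list"

datatype clause = Clause (hpred: string) (hargs: "trm list") (body: goal)

type_synonym program = "clause set"

type_synonym subst = "nat \<Rightarrow> trm"

fun tsubst :: "subst \<Rightarrow> trm \<Rightarrow> trm" where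
  "tsubst \<sigma> (V x) = \<sigma> x"
| "tsubst \<sigma> (F f ts) = F f (map (tsubst \<sigma>) ts)"

fun tvars :: "trm \<Rightarrow> nat set" where
  "tvars (V x) = {x}"
| "tvars (F f ts) = (\<Union>t\<in>set ts. tvars t)"

definition tsvars :: "trm list \<Rightarrow> nat set" where
  "tsvars ts = (\<Union>t\<in>set ts. tvars t)"

fun asubst :: "subst \<Rightarrow> atom \<Rightarrow> atom" where
  "asubst \<sigma> (Eq t u) = Eq (tsubst \<sigma> t) (tsubst \<sigma> u)"
| "asubst \<sigma> (Neq t u) = Neq (tsubst \<sigma> t) (tsubst \<sigma> u)"
| "asubst \<sigma> (At p ts) = At p (map (tsubst \<sigma>) ts)"

fun avars :: "atom \<Rightarrow> nat set" where
  "avars (Eq t u) = tvars t \<union> tvars u"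
| "avars (Neq t u) = tvars t \<union> tvars u"
| "avars (At p ts) = tsvars ts"

fun apreds :: "atom \<Rightarrow> string set" where
  "apreds (At p ts) = {p}"
| "apreds _ = {}"

fun is_nonbasic :: "atom \<Rightarrow> bool" where
  "is_nonbasic (At p ts) = True"
| "is_nonbasic _ = False"

definition gvars :: "goal \<Rightarrow> nat set" where
  "gvars G = (\<Union>a\<in>set G. avars a)"

definition gpreds :: "goal \<Rightarrow> string set" where
  "gpreds G = (\<Union>a\<in>set G. apreds a)"

definition cvars :: "clause \<Rightarrow> nat set" where
  "cvars C = tsvars (hargs C) \<union> gvars (body C)"

definition csubst :: "subst \<Rightarrow> clause \<Rightarrow> clause" where
  "csubst \<sigma> C = Clause (hpred C) (map (tsubst \<sigma>) (hargs C)) (map (asubst \<sigma>) (body C))"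

definition cpreds :: "clause \<Rightarrow> string set" where
  "cpreds C = insert (hpred C) (gpreds (body C))"

definition ppreds :: "program \<Rightarrow> string set" where
  "ppreds P = (\<Union>C\<in>P. cpreds C)"

definition variant :: "clause \<Rightarrow> clause \<Rightarrow> bool" where
  "variant C D \<longleftrightarrow> (\<exists>\<rho>::nat \<Rightarrow> nat. bij \<rho> \<and> D = csubst (\<lambda>x. V (\<rho> x)) C)"

definition local_vars_at :: "clause \<Rightarrow> nat \<Rightarrow> nat set" where
  "local_vars_at C i = avars (body C ! i) -
     (tsvars (hargs C) \<union> (\<Union>j\<in>{j. j < length (body C) \<and> j \<noteq> i}. avars (body C ! j)))"

definition unifier :: "subst \<Rightarrow> trm list \<Rightarrow> trm list \<Rightarrow> bool" where
  "unifier \<sigma> ts us \<longleftrightarrow> map (tsubst \<sigma>) ts = map (tsubst \<sigma>) us"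

definition unifiable :: "trm list \<Rightarrow> trm list \<Rightarrow> bool" where
  "unifiable ts us \<longleftrightarrow> (\<exists>\<sigma>. unifier \<sigma> ts us)"

definition sdom :: "subst \<Rightarrow> nat set" where
  "sdom \<sigma> = {x. \<sigma> x \<noteq> V x}"

definition srange_vars :: "subst \<Rightarrow> nat set" where
  "srange_vars \<sigma> = (\<Union>x\<in>sdom \<sigma>. tvars (\<sigma> x))"

definition is_mgu :: "subst \<Rightarrow> trm list \<Rightarrow> trm list \<Rightarrow> bool" where
  "is_mgu \<sigma> ts us \<longleftrightarrow>
     unifier \<sigma> ts us
   \<and> (\<forall>\<tau>. unifier \<tau> ts us \<longrightarrow> (\<exists>\<delta>. \<forall>x. \<tau> x = tsubst \<delta> (\<sigma> x)))
   \<and> (\<forall>x. tsubst \<sigma> (\<sigma> x) = \<sigma> x)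
   \<and> sdom \<sigma> \<union> srange_vars \<sigma> \<subseteq> tsvars ts \<union> tsvars us"

definition dep_edges :: "program \<Rightarrow> (string \<times> string) set" where
  "dep_edges P = {(hpred C, q) | C q. C \<in> P \<and> q \<in> gpreds (body C)}"

definition depends_on_pred :: "program \<Rightarrow> string \<Rightarrow> string \<Rightarrow> bool" where
  "depends_on_pred P p q \<longleftrightarrow> (p, q) \<in> (dep_edges P)\<^sup>+"

definition depends_on_clause :: "program \<Rightarrow> string \<Rightarrow> clause \<Rightarrow> bool" where
  "depends_on_clause P p C \<longleftrightarrow> hpred C = p \<or> depends_on_pred P p (hpred C)"

datatype mann = Inp | Any  \<comment> \<open>the annotations + and ?\<close>

type_synonym mode = "string \<Rightarrow> mann list"

definition mode_for :: "mode \<Rightarrow> program \<Rightarrow> bool" where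
  "mode_for M P \<longleftrightarrow> (\<forall>C\<in>P. length (M (hpred C)) = length (hargs C) \<and>
       (\<forall>a\<in>set (body C). \<forall>p ts. a = At p ts \<longrightarrow> length (M p) = length ts))"

definition input_vars :: "mode \<Rightarrow> string \<Rightarrow> trm list \<Rightarrow> nat set" where
  "input_vars M p ts =
     (\<Union>i\<in>{i. i < length ts \<and> i < length (M p) \<and> M p ! i = Inp}. tvars (ts ! i))"

definition safe_clause :: "mode \<Rightarrow> clause \<Rightarrow> bool" where
  "safe_clause M C \<longleftrightarrow> (\<forall>i < length (body C). \<forall>t1 t2. body C ! i = Neq t1 t2 \<longrightarrow>
     (\<forall>X \<in> tvars t1 \<union> tvars t2. X \<in> input_vars M (hpred C) (hargs C) \<or> X \<in> local_vars_at C i))"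

definition safe_prog :: "mode \<Rightarrow> program \<Rightarrow> bool" where
  "safe_prog M P \<longleftrightarrow> (\<forall>C\<in>P. safe_clause M C)"

text \<open>tstep chk M P0 Hist Df P Df' P': the program P' (with definitions Df') is obtained
  from P (with definitions Df) by one application of R1--R9, where P0 is the initial
  program and Hist the set of predicates occurring in the programs constructed so far.
  If chk holds, the applications of unfolding (R3), head generalization (R6) and
  case split (R7) are additionally required to be safe w.r.t. M.\<close>

inductive tstep :: "bool \<Rightarrow> mode \<Rightarrow> program \<Rightarrow> string set \<Rightarrow>
    program \<Rightarrow> program \<Rightarrow> program \<Rightarrow> program \<Rightarrow> bool"
  for chk :: bool and M :: mode and P0 :: program and Hist :: "string set" where
  R1_definition:
  "\<lbrakk> Bs \<noteq> []; newp \<notin> Hist; distinct xs;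
     \<forall>x\<in>set xs. \<exists>B\<in>set Bs. x \<in> gvars B;
     \<forall>B\<in>set Bs. gpreds B \<subseteq> ppreds P0;
     \<forall>B\<in>set Bs. \<exists>a\<in>set B. is_nonbasic a;
     N = {Clause newp (map V xs) B | B. B \<in> set Bs} \<rbrakk>
   \<Longrightarrow> tstep chk M P0 Hist Df P (Df \<union> N) (P \<union> N)"
| R2_definition_elimination:
  "tstep chk M P0 Hist Df P Df {C\<in>P. depends_on_clause P p C}"
| R3_unfolding:
  "\<lbrakk> C \<in> P; body C = G1 @ [At q us] @ G2;
     \<forall>D\<in>P. variant D (ren D) \<and> cvars (ren D) \<inter> cvars C = {};
     \<forall>D\<in>P. \<forall>D'\<in>P. D \<noteq> D' \<longrightarrow> cvars (ren D) \<inter> cvars (ren D') = {};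
     U = {D\<in>P. hpred D = q \<and> unifiable (hargs (ren D)) us};
     \<forall>D\<in>U. is_mgu (\<theta> D) (hargs (ren D)) us;
     chk \<longrightarrow> (\<forall>D\<in>U. \<forall>i < length (body (ren D)). \<forall>t1 t2. body (ren D) ! i = Neq t1 t2 \<longrightarrow>
        (\<forall>X \<in> tvars (tsubst (\<theta> D) t1) \<union> tvars (tsubst (\<theta> D) t2).
            X \<in> input_vars M (hpred C) (map (tsubst (\<theta> D)) (hargs C))
          \<or> X \<in> local_vars_at (ren D) i)) \<rbrakk>
   \<Longrightarrow> tstep chk M P0 Hist Df P Df
        ((P - {C}) \<union> {csubst (\<theta> D) (Clause (hpred C) (hargs C) (G1 @ body (ren D) @ G2)) | D. D \<in> U})"
| R4_folding:
  "\<lbrakk> Bs \<noteq> [];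
     {E\<in>Df. hpred E = newp} = {Clause newp (map V xs) B | B. B \<in> set Bs};
     \<forall>B\<in>set Bs. \<forall>X \<in> gvars B - set xs. \<exists>Y. \<theta> X = V Y
        \<and> Y \<notin> cvars (Clause h hs (G1 @ G2))
        \<and> (\<forall>Z\<in>gvars B. Z \<noteq> X \<longrightarrow> Y \<notin> tvars (\<theta> Z));
     \<forall>B\<in>set Bs. cf B \<in> P \<and> variant (cf B) (Clause h hs (G1 @ map (asubst \<theta>) B @ G2)) \<rbrakk>
   \<Longrightarrow> tstep chk M P0 Hist Df P Df
        ((P - cf ` set Bs) \<union> {Clause h hs (G1 @ [At newp (map \<theta> xs)] @ G2)})"
| R5_subsumption:
  "\<lbrakk> Clause h hs G1 \<in> P; C = csubst \<theta> (Clause h hs (G1 @ G2)); C \<in> P;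
     C \<noteq> Clause h hs G1 \<rbrakk>
   \<Longrightarrow> tstep chk M P0 Hist Df P Df (P - {C})"
| R6_head_generalization:
  "\<lbrakk> C = Clause p (map (tsubst (V(X := t))) hs) B; C \<in> P;
     X \<in> tsvars hs; X \<notin> cvars C;
     chk \<longrightarrow> X \<notin> input_vars M p hs \<rbrakk>
   \<Longrightarrow> tstep chk M P0 Hist Df P Df ((P - {C}) \<union> {Clause p hs (Eq (V X) t # B)})"
| R7_case_split:
  "\<lbrakk> C \<in> P; X \<notin> tvars t;
     chk \<longrightarrow> (X \<in> input_vars M (hpred C) (hargs C) \<and>
               (\<forall>Y\<in>tvars t. Y \<in> input_vars M (hpred C) (hargs C) \<or> Y \<notin> cvars C)) \<rbrakk>
   \<Longrightarrow> tstep chk M P0 Hist Df P Df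
        ((P - {C}) \<union> {csubst (V(X := t)) C, Clause (hpred C) (hargs C) (Neq (V X) t # body C)})"
| R8_equation_elimination_unif:
  "\<lbrakk> C = Clause h hs (G1 @ [Eq t1 t2] @ G2); C \<in> P; is_mgu \<theta> [t1] [t2] \<rbrakk>
   \<Longrightarrow> tstep chk M P0 Hist Df P Df ((P - {C}) \<union> {csubst \<theta> (Clause h hs (G1 @ G2))})"
| R8_equation_elimination_nonunif:
  "\<lbrakk> C = Clause h hs (G1 @ [Eq t1 t2] @ G2); C \<in> P; \<not> unifiable [t1] [t2] \<rbrakk>
   \<Longrightarrow> tstep chk M P0 Hist Df P Df (P - {C})"
| R9_1:
  "\<lbrakk> C = Clause h hs (G1 @ [Neq t1 t2] @ G2); C \<in> P; \<not> unifiable [t1] [t2] \<rbrakk>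
   \<Longrightarrow> tstep chk M P0 Hist Df P Df ((P - {C}) \<union> {Clause h hs (G1 @ G2)})"
| R9_2:
  "\<lbrakk> C = Clause h hs (G1 @ [Neq (F f ts) (F f us)] @ G2); C \<in> P; length ts = length us \<rbrakk>
   \<Longrightarrow> tstep chk M P0 Hist Df P Df
        ((P - {C}) \<union> {Clause h hs (G1 @ [Neq (ts ! i) (us ! i)] @ G2) | i. i < length ts})"
| R9_3:
  "\<lbrakk> C \<in> P; Neq (V X) (V X) \<in> set (body C) \<rbrakk>
   \<Longrightarrow> tstep chk M P0 Hist Df P Df (P - {C})"
| R9_4:
  "\<lbrakk> C = Clause h hs (G1 @ [Neq t (V X)] @ G2); C \<in> P \<rbrakk>
   \<Longrightarrow> tstep chk M P0 Hist Df P Df ((P - {C}) \<union> {Clause h hs (G1 @ [Neq (V X) t] @ G2)})"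
| R9_5:
  "\<lbrakk> C = Clause h hs (G1 @ [Neq (V X) t1] @ G2 @ [Neq (V X) t2] @ G3); C \<in> P;
     L1 = local_vars_at C (length G1); L2 = local_vars_at C (length G1 + 1 + length G2);
     bij_betw \<rho> L1 L2;
     tsubst (\<lambda>y. if y \<in> L1 then V (\<rho> y) else V y) t1 = t2 \<rbrakk>
   \<Longrightarrow> tstep chk M P0 Hist Df P Df
        ((P - {C}) \<union> {Clause h hs (G1 @ [Neq (V X) t1] @ G2 @ G3)})"

definition tseq :: "bool \<Rightarrow> mode \<Rightarrow> (nat \<Rightarrow> program) \<Rightarrow> (nat \<Rightarrow> program) \<Rightarrow> nat \<Rightarrow> bool" where
  "tseq chk M P Df n \<longleftrightarrow> Df 0 = {} \<and>
     (\<forall>k<n. tstep chk M (P 0) (\<Union>j\<le>k. ppreds (P j)) (Df k) (P k) (Df (Suc k)) (P (Suc k)))"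

end

theory Submission
  imports Defs
begin


lemma tvars_tsubst: "tvars (tsubst \<sigma> t) = (\<Union>x\<in>tvars t. tvars (\<sigma> x))"
  by (induction t) auto

lemma tsvars_map: "tsvars (map (tsubst \<sigma>) ts) = (\<Union>x\<in>tsvars ts. tvars (\<sigma> x))"
  by (auto simp: tsvars_def tvars_tsubst)

lemma avars_asubst: "avars (asubst \<sigma> a) = (\<Union>x\<in>avars a. tvars (\<sigma> x))"
  by (cases a) (auto simp: tvars_tsubst tsvars_map)

lemma gvars_map: "gvars (map (asubst \<sigma>) B) = (\<Union>x\<in>gvars B. tvars (\<sigma> x))"
  by (auto simp: gvars_def avars_asubst)

lemma gvars_append[simp]: "gvars (xs @ ys) = gvars xs \<union> gvars ys"
  by (auto simp: gvars_def)

lemma gvars_Cons[simp]: "gvars (a # ys) = avars a \<union> gvars ys"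
  by (auto simp: gvars_def)

lemma gvars_Nil[simp]: "gvars [] = {}"
  by (auto simp: gvars_def)

lemma input_vars_map: "input_vars M p (map (tsubst \<sigma>) ts) = (\<Union>x\<in>input_vars M p ts. tvars (\<sigma> x))"
  by (auto simp: input_vars_def tvars_tsubst)

lemma input_sub: "input_vars M p ts \<subseteq> tsvars ts"
  unfolding input_vars_def tsvars_def using nth_mem by blast

lemma others_eq:
  assumes "B = L @ a # R"
  shows "(\<Union>j\<in>{j. j < length B \<and> j \<noteq> length L}. avars (B ! j)) = gvars L \<union> gvars R"
proof (rule set_eqI, rule iffI)
  fix x assume "x \<in> (\<Union>j\<in>{j. j < length B \<and> j \<noteq> length L}. avars (B ! j))"
  then obtain j where j: "j < length B" "j \<noteq> length L" "x \<in> avars (B ! j)" by blast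
  show "x \<in> gvars L \<union> gvars R"
  proof (cases "j < length L")
    case True
    then have "B ! j = L ! j" using assms by (simp add: nth_append)
    then have "B ! j \<in> set L" using True by simp
    then show ?thesis using j(3) unfolding gvars_def by blast
  next
    case False
    define k where "k = j - Suc (length L)"
    have jk: "j = length L + Suc k" using False j(2) unfolding k_def by simp
    have "B ! j = R ! k" unfolding jk assms by (simp only: nth_append_length_plus nth_Cons_Suc)
    moreover have "k < length R" using j(1) assms jk by simp
    ultimately have "B ! j \<in> set R" by simp
    then show ?thesis using j(3) unfolding gvars_def by blast
  qed
next
  fix x assume "x \<in> gvars L \<union> gvars R"
  then show "x \<in> (\<Union>j\<in>{j. j < length B \<and> j \<noteq> length L}. avars (B ! j))"
  proof
    assume "x \<in> gvars L"
    then obtain a where a: "a \<in> set L" "x \<in> avars a" unfolding gvars_def by blast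
    then obtain j where "j < length L" "L ! j = a" using in_set_conv_nth[of a L] by blast
    then have j: "j < length L" "x \<in> avars (L ! j)" using a by auto
    have "B ! j = L ! j" using assms j(1) by (simp add: nth_append)
    moreover have "j < length B" "j \<noteq> length L" using assms j(1) by auto
    ultimately show ?thesis using j(2) by (intro UN_I[of j]) auto
  next
    assume "x \<in> gvars R"
    then obtain a where a: "a \<in> set R" "x \<in> avars a" unfolding gvars_def by blast
    then obtain j where "j < length R" "R ! j = a" using in_set_conv_nth[of a R] by blast
    then have j: "j < length R" "x \<in> avars (R ! j)" using a by auto
    have "B ! (length L + Suc j) = R ! j" unfolding assms by (simp only: nth_append_length_plus nth_Cons_Suc)
    moreover have "length L + Suc j < length B" "length L + Suc j \<noteq> length L" using assms j(1) by auto
    ultimately show ?thesis using j(2) by (intro UN_I[of "length L + Suc j"]) auto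
  qed
qed

lemma local_vars_decomp:
  "body C = L @ a # R \<Longrightarrow> local_vars_at C (length L) = avars a - (tsvars (hargs C) \<union> gvars L \<union> gvars R)"
  unfolding local_vars_at_def using others_eq[of "body C" L a R] by auto

lemma safe_clause_iff:
  "safe_clause M C \<longleftrightarrow> (\<forall>L t1 t2 R. body C = L @ Neq t1 t2 # R \<longrightarrow>
     (\<forall>X\<in>tvars t1 \<union> tvars t2. X \<in> input_vars M (hpred C) (hargs C) \<or> X \<notin> tsvars (hargs C) \<union> gvars L \<union> gvars R))"
proof
  assume s: "safe_clause M C"
  show "\<forall>L t1 t2 R. body C = L @ Neq t1 t2 # R \<longrightarrow>
     (\<forall>X\<in>tvars t1 \<union> tvars t2. X \<in> input_vars M (hpred C) (hargs C) \<or> X \<notin> tsvars (hargs C) \<union> gvars L \<union> gvars R)"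
  proof (intro allI impI ballI)
    fix L t1 t2 R X assume b: "body C = L @ Neq t1 t2 # R" and X: "X \<in> tvars t1 \<union> tvars t2"
    have "length L < length (body C)" "body C ! length L = Neq t1 t2" using b by auto
    then have "X \<in> input_vars M (hpred C) (hargs C) \<or> X \<in> local_vars_at C (length L)"
      using s X unfolding safe_clause_def by blast
    then show "X \<in> input_vars M (hpred C) (hargs C) \<or> X \<notin> tsvars (hargs C) \<union> gvars L \<union> gvars R"
      using local_vars_decomp[OF b] by auto
  qed
next
  assume s: "\<forall>L t1 t2 R. body C = L @ Neq t1 t2 # R \<longrightarrow>
     (\<forall>X\<in>tvars t1 \<union> tvars t2. X \<in> input_vars M (hpred C) (hargs C) \<or> X \<notin> tsvars (hargs C) \<union> gvars L \<union> gvars R)"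
  show "safe_clause M C" unfolding safe_clause_def
  proof (intro allI impI ballI)
    fix i t1 t2 X assume i: "i < length (body C)" and bi: "body C ! i = Neq t1 t2" and X: "X \<in> tvars t1 \<union> tvars t2"
    define L where "L = take i (body C)"
    define R where "R = drop (Suc i) (body C)"
    have b: "body C = L @ Neq t1 t2 # R" using i bi unfolding L_def R_def
      by (metis id_take_nth_drop)
    have l: "length L = i" using i by (simp add: L_def)
    show "X \<in> input_vars M (hpred C) (hargs C) \<or> X \<in> local_vars_at C i"
      using s[rule_format, OF b X] local_vars_decomp[OF b] X l by auto
  qed
qed

lemma split2:
  assumes "xs @ ys = L @ b # R"
  shows "(\<exists>R1. xs = L @ b # R1 \<and> R = R1 @ ys) \<or> (\<exists>L2. ys = L2 @ b # R \<and> L = xs @ L2)"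
proof -
  obtain us where "(xs = L @ us \<and> us @ ys = b # R) \<or> (xs @ us = L \<and> ys = us @ b # R)"
    using assms by (auto simp: append_eq_append_conv2)
  then show ?thesis
    by (cases us) auto
qed

lemma split3:
  assumes "G1 @ Mid @ G2 = L @ b # R"
  shows "(\<exists>R1. G1 = L @ b # R1 \<and> R = R1 @ Mid @ G2) \<or> (\<exists>L1 R1. Mid = L1 @ b # R1 \<and> L = G1 @ L1 \<and> R = R1 @ G2)
     \<or> (\<exists>L2. G2 = L2 @ b # R \<and> L = G1 @ Mid @ L2)"
proof -
  from split2[OF assms] show ?thesis
  proof
    assume "\<exists>R1. G1 = L @ b # R1 \<and> R = R1 @ Mid @ G2" then show ?thesis by blast
  next
    assume "\<exists>L2. Mid @ G2 = L2 @ b # R \<and> L = G1 @ L2"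
    then obtain L2 where a: "Mid @ G2 = L2 @ b # R" "L = G1 @ L2" by blast
    from split2[OF a(1)] show ?thesis using a(2) by auto
  qed
qed

lemma map_decomp:
  assumes "map (asubst \<sigma>) B = L @ b # R"
  obtains L0 a R0 where "B = L0 @ a # R0" "L = map (asubst \<sigma>) L0" "R = map (asubst \<sigma>) R0" "b = asubst \<sigma> a"
  using assms by (auto simp: map_eq_append_conv Cons_eq_map_conv)

lemma asubst_Neq: "asubst \<sigma> a = Neq s1 s2 \<Longrightarrow> \<exists>t1 t2. a = Neq t1 t2 \<and> s1 = tsubst \<sigma> t1 \<and> s2 = tsubst \<sigma> t2"
  by (cases a) auto

lemma mgu_relevant:
  assumes "is_mgu \<theta> ts us" "Y \<notin> tsvars ts \<union> tsvars us"
  shows "\<theta> Y = V Y" "Y \<in> tvars (\<theta> Z) \<Longrightarrow> Z = Y"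
proof -
  have r: "sdom \<theta> \<union> srange_vars \<theta> \<subseteq> tsvars ts \<union> tsvars us" using assms(1) by (simp add: is_mgu_def)
  show "\<theta> Y = V Y" using r assms(2) by (auto simp: sdom_def)
  assume "Y \<in> tvars (\<theta> Z)"
  then show "Z = Y" using r assms(2) by (cases "\<theta> Z = V Z") (auto simp: sdom_def srange_vars_def)
qed

lemma safeI:
  assumes "\<And>L t1 t2 R X. B = L @ Neq t1 t2 # R \<Longrightarrow> X \<in> tvars t1 \<union> tvars t2 \<Longrightarrow>
     X \<in> input_vars M h hs \<or> X \<notin> tsvars hs \<union> gvars L \<union> gvars R"
  shows "safe_clause M (Clause h hs B)"
  using assms unfolding safe_clause_iff by auto

lemma safeD:
  assumes "safe_clause M (Clause h hs B)" "B = L @ Neq t1 t2 # R" "X \<in> tvars t1 \<union> tvars t2"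
  shows "X \<in> input_vars M h hs \<or> X \<notin> tsvars hs \<union> gvars L \<union> gvars R"
  using assms unfolding safe_clause_iff by auto

lemma subst_safe_gen:
  assumes "\<And>L0 u1 u2 R0 Y X. B = L0 @ Neq u1 u2 # R0 \<Longrightarrow> Y \<in> tvars u1 \<union> tvars u2 \<Longrightarrow> X \<in> tvars (\<sigma> Y) \<Longrightarrow>
      X \<in> input_vars M h (map (tsubst \<sigma>) hs) \<or>
      X \<notin> tsvars (map (tsubst \<sigma>) hs) \<union> gvars (map (asubst \<sigma>) L0) \<union> gvars (map (asubst \<sigma>) R0)"
  shows "safe_clause M (Clause h (map (tsubst \<sigma>) hs) (map (asubst \<sigma>) B))"
proof (rule safeI)
  fix L t1 t2 R X assume b: "map (asubst \<sigma>) B = L @ Neq t1 t2 # R" and X: "X \<in> tvars t1 \<union> tvars t2"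
  obtain L0 a R0 where d: "B = L0 @ a # R0" "L = map (asubst \<sigma>) L0" "R = map (asubst \<sigma>) R0" "Neq t1 t2 = asubst \<sigma> a"
    using map_decomp[OF b] by metis
  obtain u1 u2 where a: "a = Neq u1 u2" "t1 = tsubst \<sigma> u1" "t2 = tsubst \<sigma> u2"
    using asubst_Neq[OF d(4)[symmetric]] by blast
  obtain Y where Y: "Y \<in> tvars u1 \<union> tvars u2" "X \<in> tvars (\<sigma> Y)" using X a by (auto simp: tvars_tsubst)
  show "X \<in> input_vars M h (map (tsubst \<sigma>) hs) \<or> X \<notin> tsvars (map (tsubst \<sigma>) hs) \<union> gvars L \<union> gvars R"
    using assms[OF d(1)[unfolded a(1)] Y] d by simp
qed

lemma remove_decomp:
  assumes "A1 @ A2 = L @ b # R"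
  shows "\<exists>L' R'. A1 @ x # A2 = L' @ b # R' \<and> gvars L' \<union> gvars R' = gvars L \<union> gvars R \<union> avars x"
  using split2[OF assms]
proof
  assume "\<exists>R1. A1 = L @ b # R1 \<and> R = R1 @ A2"
  then obtain R1 where "A1 = L @ b # R1" "R = R1 @ A2" by blast
  then show ?thesis by (intro exI[of _ L] exI[of _ "R1 @ x # A2"]) auto
next
  assume "\<exists>L2. A2 = L2 @ b # R \<and> L = A1 @ L2"
  then obtain L2 where "A2 = L2 @ b # R" "L = A1 @ L2" by blast
  then show ?thesis by (intro exI[of _ "A1 @ x # L2"] exI[of _ R]) auto
qed

lemma safe_remove:
  assumes "safe_clause M (Clause h hs (A1 @ [x] @ A2))"
  shows "safe_clause M (Clause h hs (A1 @ A2))"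
proof (rule safeI)
  fix L t1 t2 R X assume b: "A1 @ A2 = L @ Neq t1 t2 # R" and X: "X \<in> tvars t1 \<union> tvars t2"
  obtain L' R' where d: "A1 @ x # A2 = L' @ Neq t1 t2 # R'" "gvars L' \<union> gvars R' = gvars L \<union> gvars R \<union> avars x"
    using remove_decomp[OF b] by blast
  have "X \<in> input_vars M h hs \<or> X \<notin> tsvars hs \<union> gvars L' \<union> gvars R'"
    using safeD[OF assms] d(1) X by simp
  then show "X \<in> input_vars M h hs \<or> X \<notin> tsvars hs \<union> gvars L \<union> gvars R"
    using d(2) by blast
qed

lemma safe_R9_2:
  assumes "safe_clause M (Clause h hs (G1 @ [Neq (F f ts) (F f us)] @ G2))" "i < length ts" "length ts = length us"
  shows "safe_clause M (Clause h hs (G1 @ [Neq (ts ! i) (us ! i)] @ G2))"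
proof (rule safeI)
  fix L t1 t2 R X assume b: "G1 @ [Neq (ts ! i) (us ! i)] @ G2 = L @ Neq t1 t2 # R" and X: "X \<in> tvars t1 \<union> tvars t2"
  have sub: "tvars (ts ! i) \<union> tvars (us ! i) \<subseteq> tvars (F f ts) \<union> tvars (F f us)"
    using assms(2,3) by auto
  from split3[OF b] show "X \<in> input_vars M h hs \<or> X \<notin> tsvars hs \<union> gvars L \<union> gvars R"
  proof (elim disjE exE conjE)
    fix R1 assume "G1 = L @ Neq t1 t2 # R1" "R = R1 @ [Neq (ts ! i) (us ! i)] @ G2"
    then show ?thesis using safeD[OF assms(1) _ X, of L "R1 @ [Neq (F f ts) (F f us)] @ G2"] sub by auto
  next
    fix L1 R1 assume m: "[Neq (ts ! i) (us ! i)] = L1 @ Neq t1 t2 # R1" "L = G1 @ L1" "R = R1 @ G2"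
    then have "L1 = []" "R1 = []" "t1 = ts ! i" "t2 = us ! i" by (auto simp: Cons_eq_append_conv)
    note e = this
    have X': "X \<in> tvars (F f ts) \<union> tvars (F f us)" using X sub e by blast
    have "X \<in> input_vars M h hs \<or> X \<notin> tsvars hs \<union> gvars G1 \<union> gvars G2"
      using safeD[OF assms(1) _ X', of G1 G2] by simp
    then show ?thesis using m e by simp
  next
    fix L2 assume "G2 = L2 @ Neq t1 t2 # R" "L = G1 @ [Neq (ts ! i) (us ! i)] @ L2"
    then show ?thesis using safeD[OF assms(1) _ X, of "G1 @ [Neq (F f ts) (F f us)] @ L2" R] sub by auto
  qed
qed

lemma safe_R9_4:
  assumes "safe_clause M (Clause h hs (G1 @ [Neq t (V X)] @ G2))"
  shows "safe_clause M (Clause h hs (G1 @ [Neq (V X) t] @ G2))"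
proof (rule safeI)
  fix L t1 t2 R Z assume b: "G1 @ [Neq (V X) t] @ G2 = L @ Neq t1 t2 # R" and X: "Z \<in> tvars t1 \<union> tvars t2"
  from split3[OF b] show "Z \<in> input_vars M h hs \<or> Z \<notin> tsvars hs \<union> gvars L \<union> gvars R"
  proof (elim disjE exE conjE)
    fix R1 assume "G1 = L @ Neq t1 t2 # R1" "R = R1 @ [Neq (V X) t] @ G2"
    then show ?thesis using safeD[OF assms(1) _ X, of L "R1 @ [Neq t (V X)] @ G2"] by auto
  next
    fix L1 R1 assume m: "[Neq (V X) t] = L1 @ Neq t1 t2 # R1" "L = G1 @ L1" "R = R1 @ G2"
    then have "L1 = []" "R1 = []" "t1 = V X" "t2 = t" by (auto simp: Cons_eq_append_conv)
    then show ?thesis using safeD[OF assms(1), of G1 t "V X" G2 Z] m X by auto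
  next
    fix L2 assume "G2 = L2 @ Neq t1 t2 # R" "L = G1 @ [Neq (V X) t] @ L2"
    then show ?thesis using safeD[OF assms(1) _ X, of "G1 @ [Neq t (V X)] @ L2" R] by auto
  qed
qed

lemma csubst_Clause: "csubst \<sigma> (Clause h hs B) = Clause h (map (tsubst \<sigma>) hs) (map (asubst \<sigma>) B)"
  by (simp add: csubst_def)

lemma tsvars_single[simp]: "tsvars [t] = tvars t"
  by (simp add: tsvars_def)

lemma safe_variant:
  assumes "safe_clause M C" "variant C D"
  shows "safe_clause M D"
proof -
  obtain \<rho> where r: "bij \<rho>" "D = csubst (\<lambda>x. V (\<rho> x)) C" using assms(2) by (auto simp: variant_def)
  obtain h hs B where C: "C = Clause h hs B" by (cases C)
  have inj: "inj \<rho>" using r(1) bij_is_inj by blast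
  have D: "D = Clause h (map (tsubst (\<lambda>x. V (\<rho> x))) hs) (map (asubst (\<lambda>x. V (\<rho> x))) B)"
    using r C by (simp add: csubst_Clause)
  show ?thesis unfolding D
  proof (rule subst_safe_gen)
    fix L0 u1 u2 R0 Y X assume b: "B = L0 @ Neq u1 u2 # R0" and Y: "Y \<in> tvars u1 \<union> tvars u2" and X: "X \<in> tvars (V (\<rho> Y))"
    have "Y \<in> input_vars M h hs \<or> Y \<notin> tsvars hs \<union> gvars L0 \<union> gvars R0"
      using safeD[OF assms(1)[unfolded C] b Y] .
    then show "X \<in> input_vars M h (map (tsubst (\<lambda>x. V (\<rho> x))) hs) \<or>
      X \<notin> tsvars (map (tsubst (\<lambda>x. V (\<rho> x))) hs) \<union> gvars (map (asubst (\<lambda>x. V (\<rho> x))) L0) \<union> gvars (map (asubst (\<lambda>x. V (\<rho> x))) R0)"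
      using X inj by (auto simp: input_vars_map tsvars_map gvars_map dest: injD)
  qed
qed

lemma safe_R6:
  assumes "safe_clause M (Clause p (map (tsubst (V(X := t))) hs) B)"
    "X \<in> tsvars hs" "X \<notin> cvars (Clause p (map (tsubst (V(X := t))) hs) B)" "X \<notin> input_vars M p hs"
  shows "safe_clause M (Clause p hs (Eq (V X) t # B))"
proof (rule safeI)
  fix L t1 t2 R Z assume b: "Eq (V X) t # B = L @ Neq t1 t2 # R" and Z: "Z \<in> tvars t1 \<union> tvars t2"
  obtain L' where L: "L = Eq (V X) t # L'" "B = L' @ Neq t1 t2 # R" using b by (cases L) auto
  have ZX: "Z \<noteq> X" using assms(3) L Z by (auto simp: cvars_def)
  have "Z \<in> input_vars M p (map (tsubst (V(X := t))) hs) \<or> Z \<notin> tsvars (map (tsubst (V(X := t))) hs) \<union> gvars L' \<union> gvars R"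
    using safeD[OF assms(1) L(2) Z] .
  then show "Z \<in> input_vars M p hs \<or> Z \<notin> tsvars hs \<union> gvars L \<union> gvars R"
  proof
    assume "Z \<in> input_vars M p (map (tsubst (V(X := t))) hs)"
    then obtain x where "x \<in> input_vars M p hs" "Z \<in> tvars ((V(X := t)) x)" by (auto simp: input_vars_map)
    then show ?thesis using assms(4) by (cases "x = X") auto
  next
    assume n: "Z \<notin> tsvars (map (tsubst (V(X := t))) hs) \<union> gvars L' \<union> gvars R"
    have "Z \<notin> tsvars hs" using n ZX unfolding tsvars_map by (auto split: if_splits)
    moreover have "Z \<notin> tvars t" using n assms(2) unfolding tsvars_map by force
    ultimately show ?thesis using n L ZX by auto
  qed
qed

lemma safe_R7a:
  assumes "safe_clause M (Clause h hs B)" "X \<notin> tvars t"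
    "X \<in> input_vars M h hs" "\<forall>Y\<in>tvars t. Y \<in> input_vars M h hs \<or> Y \<notin> cvars (Clause h hs B)"
  shows "safe_clause M (Clause h hs (Neq (V X) t # B))"
proof (rule safeI)
  fix L t1 t2 R Z assume b: "Neq (V X) t # B = L @ Neq t1 t2 # R" and Z: "Z \<in> tvars t1 \<union> tvars t2"
  show "Z \<in> input_vars M h hs \<or> Z \<notin> tsvars hs \<union> gvars L \<union> gvars R"
  proof (cases L)
    case Nil
    then have "t1 = V X" "t2 = t" "R = B" using b by auto
    then show ?thesis using Z assms(3,4) Nil by (auto simp: cvars_def)
  next
    case (Cons a L')
    then have L: "a = Neq (V X) t" "B = L' @ Neq t1 t2 # R" using b by auto
    have s: "Z \<in> input_vars M h hs \<or> Z \<notin> tsvars hs \<union> gvars L' \<union> gvars R" using safeD[OF assms(1) L(2) Z] .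
    have "X \<in> tsvars hs" using assms(3) input_sub by blast
    moreover have "Z \<in> gvars B" using L Z by auto
    ultimately show ?thesis using s assms(4) Cons L by (auto simp: cvars_def)
  qed
qed

lemma safe_R7b:
  assumes "safe_clause M (Clause h hs B)" "X \<notin> tvars t"
    "X \<in> input_vars M h hs" "\<forall>Y\<in>tvars t. Y \<in> input_vars M h hs \<or> Y \<notin> cvars (Clause h hs B)"
  shows "safe_clause M (csubst (V(X := t)) (Clause h hs B))"
  unfolding csubst_Clause
proof (rule subst_safe_gen)
  fix L0 u1 u2 R0 Y Z assume b: "B = L0 @ Neq u1 u2 # R0" and Y: "Y \<in> tvars u1 \<union> tvars u2" and Z: "Z \<in> tvars ((V(X := t)) Y)"
  have XH: "X \<in> tsvars hs" using assms(3) input_sub by blast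
  have s: "Y \<in> input_vars M h hs \<or> Y \<notin> tsvars hs \<union> gvars L0 \<union> gvars R0" using safeD[OF assms(1) b Y] .
  show "Z \<in> input_vars M h (map (tsubst (V(X := t))) hs) \<or>
      Z \<notin> tsvars (map (tsubst (V(X := t))) hs) \<union> gvars (map (asubst (V(X := t))) L0) \<union> gvars (map (asubst (V(X := t))) R0)"
  proof (cases "Y \<in> input_vars M h hs")
    case True
    then show ?thesis using Z assms(3) unfolding input_vars_map by (cases "Y = X") force+
  next
    case False
    then have n: "Y \<notin> tsvars hs \<union> gvars L0 \<union> gvars R0" using s by blast
    have YX: "Y \<noteq> X" using n XH by blast
    have ZY: "Z = Y" using Z YX by simp
    have "Y \<in> gvars B" using b Y by auto
    then have Yt: "Y \<notin> tvars t" using assms(4) False by (auto simp: cvars_def)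
    show ?thesis unfolding ZY using n Yt YX by (auto simp: tsvars_map gvars_map split: if_splits)
  qed
qed

lemma safe_R8:
  assumes "safe_clause M (Clause h hs (G1 @ [Eq t1 t2] @ G2))" "is_mgu \<theta> [t1] [t2]"
  shows "safe_clause M (csubst \<theta> (Clause h hs (G1 @ G2)))"
  unfolding csubst_Clause
proof (rule subst_safe_gen)
  fix L0 u1 u2 R0 Y Z assume b: "G1 @ G2 = L0 @ Neq u1 u2 # R0" and Y: "Y \<in> tvars u1 \<union> tvars u2" and Z: "Z \<in> tvars (\<theta> Y)"
  obtain L' R' where d: "G1 @ Eq t1 t2 # G2 = L' @ Neq u1 u2 # R'" "gvars L' \<union> gvars R' = gvars L0 \<union> gvars R0 \<union> avars (Eq t1 t2)"
    using remove_decomp[OF b] by blast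
  have s: "Y \<in> input_vars M h hs \<or> Y \<notin> tsvars hs \<union> gvars L' \<union> gvars R'" using safeD[OF assms(1)[simplified] d(1) Y] .
  then show "Z \<in> input_vars M h (map (tsubst \<theta>) hs) \<or>
      Z \<notin> tsvars (map (tsubst \<theta>) hs) \<union> gvars (map (asubst \<theta>) L0) \<union> gvars (map (asubst \<theta>) R0)"
  proof
    assume "Y \<in> input_vars M h hs" then show ?thesis using Z by (auto simp: input_vars_map)
  next
    assume n: "Y \<notin> tsvars hs \<union> gvars L' \<union> gvars R'"
    then have nt: "Y \<notin> tsvars [t1] \<union> tsvars [t2]" using d(2) by auto
    have ZY: "Z = Y" using mgu_relevant(1)[OF assms(2) nt] Z by simp
    have "\<And>W. Y \<in> tvars (\<theta> W) \<Longrightarrow> W = Y" using mgu_relevant(2)[OF assms(2) nt] by blast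
    then show ?thesis unfolding ZY using n d(2) by (auto simp: tsvars_map gvars_map)
  qed
qed

lemma notin_UN_vars:
  assumes "\<And>W. Y \<in> tvars (\<theta> W) \<Longrightarrow> W = Y" "Y \<notin> S"
  shows "Y \<notin> (\<Union>x\<in>S. tvars (\<theta> x))"
  using assms by blast

lemma safe_R3:
  assumes sC: "safe_clause M C" and bC: "body C = G1 @ [At q us] @ G2"
    and disj: "cvars D' \<inter> cvars C = {}" and mgu: "is_mgu \<theta> (hargs D') us"
    and chk: "\<forall>i < length (body D'). \<forall>t1 t2. body D' ! i = Neq t1 t2 \<longrightarrow>
        (\<forall>X \<in> tvars (tsubst \<theta> t1) \<union> tvars (tsubst \<theta> t2).
            X \<in> input_vars M (hpred C) (map (tsubst \<theta>) (hargs C))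
          \<or> X \<in> local_vars_at D' i)"
  shows "safe_clause M (csubst \<theta> (Clause (hpred C) (hargs C) (G1 @ body D' @ G2)))"
  unfolding csubst_Clause
proof (rule subst_safe_gen)
  fix L0 u1 u2 R0 Y Z assume b: "G1 @ body D' @ G2 = L0 @ Neq u1 u2 # R0" and Y: "Y \<in> tvars u1 \<union> tvars u2" and Z: "Z \<in> tvars (\<theta> Y)"
  let ?h = "hpred C" and ?hs = "hargs C"
  have C: "C = Clause ?h ?hs (G1 @ [At q us] @ G2)" using bC by (cases C) auto
  have cvC: "cvars C = tsvars ?hs \<union> gvars G1 \<union> tsvars us \<union> gvars G2" using bC by (simp add: cvars_def Un_assoc)
  have cvD: "cvars D' = tsvars (hargs D') \<union> gvars (body D')" by (simp add: cvars_def)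
  have rng: "sdom \<theta> \<union> srange_vars \<theta> \<subseteq> tsvars (hargs D') \<union> tsvars us" using mgu by (simp add: is_mgu_def)
  have rel: "\<And>W Z. W \<notin> tsvars (hargs D') \<Longrightarrow> W \<notin> tsvars us \<Longrightarrow> W \<in> tvars (\<theta> Z) \<Longrightarrow> Z = W"
  proof -
    fix W Z assume w: "W \<notin> tsvars (hargs D')" "W \<notin> tsvars us" "W \<in> tvars (\<theta> Z)"
    show "Z = W"
    proof (cases "\<theta> Z = V Z")
      case True then show ?thesis using w by simp
    next
      case False
      then have "Z \<in> sdom \<theta>" by (simp add: sdom_def)
      then have "W \<in> srange_vars \<theta>" using w(3) by (auto simp: srange_vars_def)
      then show ?thesis using rng w by blast
    qed
  qed
  let ?goal = "Z \<in> input_vars M ?h (map (tsubst \<theta>) ?hs) \<or>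
      Z \<notin> tsvars (map (tsubst \<theta>) ?hs) \<union> gvars (map (asubst \<theta>) L0) \<union> gvars (map (asubst \<theta>) R0)"
  have outer: ?goal if o1: "C = Clause ?h ?hs (L' @ Neq u1 u2 # R')"
      and o2: "tsvars us \<subseteq> gvars L' \<union> gvars R'"
      and o3: "gvars L0 \<union> gvars R0 \<subseteq> gvars L' \<union> gvars R' \<union> gvars (body D')" for L' R'
  proof -
    have s: "Y \<in> input_vars M ?h ?hs \<or> Y \<notin> tsvars ?hs \<union> gvars L' \<union> gvars R'"
      using safeD[OF back_subst[of "safe_clause M", OF sC o1] refl Y] .
    then show ?goal
    proof
      assume "Y \<in> input_vars M ?h ?hs" then show ?thesis using Z unfolding input_vars_map by blast
    next
      assume n: "Y \<notin> tsvars ?hs \<union> gvars L' \<union> gvars R'"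
      have "Y \<in> cvars (Clause ?h ?hs (L' @ Neq u1 u2 # R'))" using Y by (simp add: cvars_def)
      then have YC: "Y \<in> cvars C" using back_subst[of "\<lambda>c. Y \<in> cvars c", OF _ o1[symmetric]] by blast
      have YD: "Y \<notin> cvars D'" using YC disj by blast
      have Yus: "Y \<notin> tsvars us" using n o2 by blast
      have YhD: "Y \<notin> tsvars (hargs D')" using YD cvD by blast
      have r: "\<And>W. Y \<in> tvars (\<theta> W) \<Longrightarrow> W = Y" using rel[OF YhD Yus] by blast
      have "Y \<notin> sdom \<theta>" using rng YhD Yus by blast
      then have "\<theta> Y = V Y" by (simp add: sdom_def)
      then have ZY: "Z = Y" using Z by simp
      have n2: "Y \<notin> gvars L0 \<union> gvars R0" using n o3 YD cvD by blast
      have "Y \<notin> tsvars ?hs" using n by simp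
      then have "Y \<notin> (\<Union>x\<in>tsvars ?hs. tvars (\<theta> x))" using r by blast
      moreover have "Y \<notin> (\<Union>x\<in>gvars L0. tvars (\<theta> x))" using n2 r by blast
      moreover have "Y \<notin> (\<Union>x\<in>gvars R0. tvars (\<theta> x))" using n2 r by blast
      ultimately show ?thesis unfolding ZY tsvars_map gvars_map by blast
    qed
  qed
  from split3[OF b] show ?goal
  proof (elim disjE exE conjE)
    fix R1 assume a: "G1 = L0 @ Neq u1 u2 # R1" "R0 = R1 @ body D' @ G2"
    have e1: "C = Clause ?h ?hs (L0 @ Neq u1 u2 # R1 @ At q us # G2)" using C a by simp
    have e2: "tsvars us \<subseteq> gvars L0 \<union> gvars (R1 @ At q us # G2)" by auto
    have e3: "gvars L0 \<union> gvars R0 \<subseteq> gvars L0 \<union> gvars (R1 @ At q us # G2) \<union> gvars (body D')"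
      unfolding a(2) by auto
    show ?goal by (rule outer[OF e1 e2 e3])
  next
    fix L2 assume a: "G2 = L2 @ Neq u1 u2 # R0" "L0 = G1 @ body D' @ L2"
    have e1: "C = Clause ?h ?hs ((G1 @ At q us # L2) @ Neq u1 u2 # R0)" using C a by simp
    have e2: "tsvars us \<subseteq> gvars (G1 @ At q us # L2) \<union> gvars R0" by auto
    have e3: "gvars L0 \<union> gvars R0 \<subseteq> gvars (G1 @ At q us # L2) \<union> gvars R0 \<union> gvars (body D')"
      unfolding a(2) by auto
    show ?goal by (rule outer[OF e1 e2 e3])
  next
    fix L1 R1 assume a: "body D' = L1 @ Neq u1 u2 # R1" "L0 = G1 @ L1" "R0 = R1 @ G2"
    have i: "length L1 < length (body D')" "body D' ! length L1 = Neq u1 u2" using a by auto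
    have "Z \<in> tvars (tsubst \<theta> u1) \<union> tvars (tsubst \<theta> u2)" using Y Z unfolding tvars_tsubst by blast
    then have "Z \<in> input_vars M ?h (map (tsubst \<theta>) ?hs) \<or> Z \<in> local_vars_at D' (length L1)"
      using chk i by blast
    then show ?goal
    proof
      assume "Z \<in> local_vars_at D' (length L1)"
      then have l: "Z \<in> tvars u1 \<union> tvars u2" "Z \<notin> tsvars (hargs D') \<union> gvars L1 \<union> gvars R1"
        using local_vars_decomp[OF a(1)] by auto
      have ZD: "Z \<in> cvars D'" using a(1) l(1) by (simp add: cvars_def)
      then have ZC: "Z \<notin> cvars C" using disj by blast
      then have Zus: "Z \<notin> tsvars us" using cvC by blast
      have r: "\<And>W. Z \<in> tvars (\<theta> W) \<Longrightarrow> W = Z" using rel l(2) Zus by blast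
      have "Z \<notin> (\<Union>x\<in>tsvars ?hs. tvars (\<theta> x))" using ZC cvC r by blast
      moreover have "Z \<notin> (\<Union>x\<in>gvars L0. tvars (\<theta> x))" using ZC cvC l a r by auto
      moreover have "Z \<notin> (\<Union>x\<in>gvars R0. tvars (\<theta> x))" using ZC cvC l a r by auto
      ultimately show ?goal unfolding tsvars_map gvars_map by blast
    qed simp
  qed
qed

lemma safe_R4:
  assumes ne: "Bs \<noteq> []" and cov: "\<forall>x\<in>set xs. \<exists>B\<in>set Bs. x \<in> gvars B"
    and sB: "\<forall>B\<in>set Bs. safe_clause M (Clause h hs (G1 @ map (asubst \<theta>) B @ G2))"
  shows "safe_clause M (Clause h hs (G1 @ [At newp (map \<theta> xs)] @ G2))"
proof (rule safeI)
  fix L t1 t2 R X assume b: "G1 @ [At newp (map \<theta> xs)] @ G2 = L @ Neq t1 t2 # R" and X: "X \<in> tvars t1 \<union> tvars t2"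
  obtain B0 where B0: "B0 \<in> set Bs" using ne by (cases Bs) auto
  have gen: "X \<in> input_vars M h hs \<or> X \<notin> tsvars hs \<union> gvars L \<union> gvars R"
    if o: "\<And>B. G1 @ map (asubst \<theta>) B @ G2 = L' B @ Neq t1 t2 # R' B"
      and g: "\<And>B. gvars (map (asubst \<theta>) B) \<subseteq> gvars (L' B) \<union> gvars (R' B)"
      and gg: "gvars L \<union> gvars R \<subseteq> gvars (L' B0) \<union> gvars (R' B0) \<union> tsvars (map \<theta> xs)"
    for L' R'
  proof (rule ccontr)
    assume c: "\<not> ?thesis"
    then have ni: "X \<notin> input_vars M h hs" and inn: "X \<in> tsvars hs \<union> gvars L \<union> gvars R" by auto
    have loc: "\<And>B. B \<in> set Bs \<Longrightarrow> X \<notin> tsvars hs \<union> gvars (L' B) \<union> gvars (R' B)"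
      using sB safeD[OF _ o X] ni by blast
    have "X \<notin> tsvars (map \<theta> xs)"
    proof
      assume "X \<in> tsvars (map \<theta> xs)"
      then obtain x where x: "x \<in> set xs" "X \<in> tvars (\<theta> x)" by (auto simp: tsvars_def)
      obtain B where B: "B \<in> set Bs" "x \<in> gvars B" using cov x(1) by blast
      have "X \<in> gvars (map (asubst \<theta>) B)" using B(2) x(2) by (auto simp: gvars_map)
      then show False using loc[OF B(1)] g[of B] by auto
    qed
    then show False using loc[OF B0] inn gg by auto
  qed
  from split3[OF b] show "X \<in> input_vars M h hs \<or> X \<notin> tsvars hs \<union> gvars L \<union> gvars R"
  proof (elim disjE exE conjE)
    fix R1 assume a: "G1 = L @ Neq t1 t2 # R1" "R = R1 @ [At newp (map \<theta> xs)] @ G2"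
    have o: "\<And>B. G1 @ map (asubst \<theta>) B @ G2 = L @ Neq t1 t2 # (R1 @ map (asubst \<theta>) B @ G2)" using a by simp
    have g: "\<And>B. gvars (map (asubst \<theta>) B) \<subseteq> gvars L \<union> gvars (R1 @ map (asubst \<theta>) B @ G2)" by auto
    have gg: "gvars L \<union> gvars R \<subseteq> gvars L \<union> gvars (R1 @ map (asubst \<theta>) B0 @ G2) \<union> tsvars (map \<theta> xs)"
      unfolding a(2) by auto
    show ?thesis by (rule gen[OF o g gg])
  next
    fix L1 R1 assume m: "[At newp (map \<theta> xs)] = L1 @ Neq t1 t2 # R1"
    then show ?thesis by (cases L1) auto
  next
    fix L2 assume a: "G2 = L2 @ Neq t1 t2 # R" "L = G1 @ [At newp (map \<theta> xs)] @ L2"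
    have o: "\<And>B. G1 @ map (asubst \<theta>) B @ G2 = (G1 @ map (asubst \<theta>) B @ L2) @ Neq t1 t2 # R" using a by simp
    have g: "\<And>B. gvars (map (asubst \<theta>) B) \<subseteq> gvars (G1 @ map (asubst \<theta>) B @ L2) \<union> gvars R" by auto
    have gg: "gvars L \<union> gvars R \<subseteq> gvars (G1 @ map (asubst \<theta>) B0 @ L2) \<union> gvars R \<union> tsvars (map \<theta> xs)"
      unfolding a(2) by auto
    show ?thesis by (rule gen[OF o g gg])
  qed
qed


definition defs_ok :: "program \<Rightarrow> bool" where
  "defs_ok D \<longleftrightarrow> (\<forall>E\<in>D. \<exists>xs B. E = Clause (hpred E) (map V xs) B \<and>
      (\<forall>x\<in>set xs. \<exists>B'. Clause (hpred E) (map V xs) B' \<in> D \<and> x \<in> gvars B'))"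

lemma safe_prog_Un[simp]: "safe_prog M (A \<union> B) \<longleftrightarrow> safe_prog M A \<and> safe_prog M B"
  by (auto simp: safe_prog_def)

lemma safe_prog_Diff: "safe_prog M A \<Longrightarrow> safe_prog M (A - B)"
  by (auto simp: safe_prog_def)

lemma safe_prog_subset: "safe_prog M A \<Longrightarrow> B \<subseteq> A \<Longrightarrow> safe_prog M B"
  by (auto simp: safe_prog_def)

lemma tstep_Df_mono: "tstep chk M P0 H Df P Df' P' \<Longrightarrow> Df \<subseteq> Df'"
  by (induction rule: tstep.induct) auto

lemma map_V_inj: "map V xs = map V ys \<Longrightarrow> xs = ys"
  by (simp add: inj_def inj_map_eq_map)

lemma step_safe:
  assumes st: "tstep True M P0 H Df P Df' P'" and sP: "safe_prog M P" and sD: "safe_prog M Df'"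
    and dok: "defs_ok Df"
  shows "safe_prog M P' \<and> defs_ok Df'"
  using st
proof cases
  case (R1_definition Bs newp xs N)
  have "safe_prog M N" using sD R1_definition by simp
  then have s: "safe_prog M P'" using sP R1_definition by simp
  have "defs_ok (Df \<union> N)" unfolding defs_ok_def
  proof
    fix E assume E: "E \<in> Df \<union> N"
    show "\<exists>xs B. E = Clause (hpred E) (map V xs) B \<and>
      (\<forall>x\<in>set xs. \<exists>B'. Clause (hpred E) (map V xs) B' \<in> Df \<union> N \<and> x \<in> gvars B')"
    proof (cases "E \<in> Df")
      case True
      then show ?thesis using dok unfolding defs_ok_def by blast
    next
      case False
      then obtain B where B: "E = Clause newp (map V xs) B" "B \<in> set Bs" using E R1_definition by auto
      have "\<forall>x\<in>set xs. \<exists>B'. Clause (hpred E) (map V xs) B' \<in> Df \<union> N \<and> x \<in> gvars B'"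
        using R1_definition B by auto
      then show ?thesis using B by auto
    qed
  qed
  then show ?thesis using s R1_definition by simp
next
  case (R2_definition_elimination p)
  then show ?thesis using sP dok by (auto simp: safe_prog_def)
next
  case (R3_unfolding C G1 q us G2 ren U \<theta>)
  have "safe_prog M {csubst (\<theta> D) (Clause (hpred C) (hargs C) (G1 @ body (ren D) @ G2)) | D. D \<in> U}"
    unfolding safe_prog_def
  proof (intro ballI)
    fix E assume "E \<in> {csubst (\<theta> D) (Clause (hpred C) (hargs C) (G1 @ body (ren D) @ G2)) | D. D \<in> U}"
    then obtain D where D: "D \<in> U" "E = csubst (\<theta> D) (Clause (hpred C) (hargs C) (G1 @ body (ren D) @ G2))" by blast
    have DP: "D \<in> P" using D(1) R3_unfolding by blast
    have sC: "safe_clause M C" using sP R3_unfolding by (auto simp: safe_prog_def)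
    have disj: "cvars (ren D) \<inter> cvars C = {}" using DP R3_unfolding by blast
    have mgu: "is_mgu (\<theta> D) (hargs (ren D)) us" using D(1) R3_unfolding by blast
    have chk: "\<forall>i < length (body (ren D)). \<forall>t1 t2. body (ren D) ! i = Neq t1 t2 \<longrightarrow>
        (\<forall>X \<in> tvars (tsubst (\<theta> D) t1) \<union> tvars (tsubst (\<theta> D) t2).
            X \<in> input_vars M (hpred C) (map (tsubst (\<theta> D)) (hargs C))
          \<or> X \<in> local_vars_at (ren D) i)" using D(1) R3_unfolding by blast
    show "safe_clause M E" unfolding D(2) by (rule safe_R3[OF sC _ disj mgu chk]) (use R3_unfolding in simp)
  qed
  then show ?thesis using sP dok R3_unfolding by (simp add: safe_prog_Diff)
next
  case (R4_folding Bs newp xs \<theta> h hs G1 G2 cf)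
  have cov: "\<forall>x\<in>set xs. \<exists>B\<in>set Bs. x \<in> gvars B"
  proof
    fix x assume x: "x \<in> set xs"
    obtain B0 where B0: "B0 \<in> set Bs" using R4_folding by (cases Bs) auto
    have "Clause newp (map V xs) B0 \<in> {E\<in>Df. hpred E = newp}" using B0 R4_folding by blast
    then have E0: "Clause newp (map V xs) B0 \<in> Df" by blast
    then obtain xs' B where xB: "Clause newp (map V xs) B0 = Clause newp (map V xs') B"
       "\<forall>x\<in>set xs'. \<exists>B'. Clause newp (map V xs') B' \<in> Df \<and> x \<in> gvars B'"
      using dok unfolding defs_ok_def by fastforce
    have "xs' = xs" using xB(1) map_V_inj by simp
    then obtain B' where B': "Clause newp (map V xs) B' \<in> Df" "x \<in> gvars B'" using xB(2) x by blast
    then have "Clause newp (map V xs) B' \<in> {Clause newp (map V xs) B | B. B \<in> set Bs}"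
      using R4_folding by (metis (mono_tags, lifting) clause.sel(1) mem_Collect_eq)
    then have "B' \<in> set Bs" by auto
    then show "\<exists>B\<in>set Bs. x \<in> gvars B" using B' by blast
  qed
  have sB: "\<forall>B\<in>set Bs. safe_clause M (Clause h hs (G1 @ map (asubst \<theta>) B @ G2))"
  proof
    fix B assume B: "B \<in> set Bs"
    then have "cf B \<in> P" "variant (cf B) (Clause h hs (G1 @ map (asubst \<theta>) B @ G2))" using R4_folding by auto
    then show "safe_clause M (Clause h hs (G1 @ map (asubst \<theta>) B @ G2))"
      using sP safe_variant by (auto simp: safe_prog_def)
  qed
  have "safe_clause M (Clause h hs (G1 @ [At newp (map \<theta> xs)] @ G2))"
    by (rule safe_R4[OF _ cov sB]) (use R4_folding in simp)
  then show ?thesis using sP dok R4_folding by (simp add: safe_prog_Diff safe_prog_def)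
next
  case (R5_subsumption h hs G1 C \<theta> G2)
  then show ?thesis using sP dok by (simp add: safe_prog_Diff)
next
  case (R6_head_generalization C p X t hs B)
  have "safe_clause M (Clause p hs (Eq (V X) t # B))"
    by (rule safe_R6) (use R6_head_generalization sP in \<open>auto simp: safe_prog_def\<close>)
  then show ?thesis using sP dok R6_head_generalization by (simp add: safe_prog_Diff safe_prog_def)
next
  case (R7_case_split C X t)
  obtain h hs B where C: "C = Clause h hs B" by (cases C)
  have sC: "safe_clause M (Clause h hs B)" using sP R7_case_split C by (auto simp: safe_prog_def)
  have c: "X \<in> input_vars M h hs" "\<forall>Y\<in>tvars t. Y \<in> input_vars M h hs \<or> Y \<notin> cvars (Clause h hs B)"
    using R7_case_split C by auto
  have "safe_clause M (Clause h hs (Neq (V X) t # B))" by (rule safe_R7a[OF sC _ c]) (use R7_case_split in simp)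
  moreover have "safe_clause M (csubst (V(X := t)) (Clause h hs B))" by (rule safe_R7b[OF sC _ c]) (use R7_case_split in simp)
  ultimately show ?thesis using sP dok R7_case_split C by (simp add: safe_prog_Diff safe_prog_def)
next
  case (R8_equation_elimination_unif C h hs G1 t1 t2 G2 \<theta>)
  have "safe_clause M (csubst \<theta> (Clause h hs (G1 @ G2)))"
    by (rule safe_R8[of M h hs G1 t1 t2 G2]) (use R8_equation_elimination_unif sP in \<open>auto simp: safe_prog_def\<close>)
  then show ?thesis using sP dok R8_equation_elimination_unif by (simp add: safe_prog_Diff safe_prog_def)
next
  case (R8_equation_elimination_nonunif C h hs G1 t1 t2 G2)
  then show ?thesis using sP dok by (simp add: safe_prog_Diff)
next
  case (R9_1 C h hs G1 t1 t2 G2)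
  have "safe_clause M (Clause h hs (G1 @ G2))"
    by (rule safe_remove[of M h hs G1 "Neq t1 t2" G2]) (use R9_1 sP in \<open>auto simp: safe_prog_def\<close>)
  then show ?thesis using sP dok R9_1 by (simp add: safe_prog_Diff safe_prog_def)
next
  case (R9_2 C h hs G1 f ts us G2)
  have sC: "safe_clause M (Clause h hs (G1 @ [Neq (F f ts) (F f us)] @ G2))" using R9_2 sP by (auto simp: safe_prog_def)
  have "safe_prog M {Clause h hs (G1 @ [Neq (ts ! i) (us ! i)] @ G2) | i. i < length ts}"
  proof -
    have len: "length ts = length us" using R9_2 by simp
    show ?thesis using safe_R9_2[OF sC _ len] by (auto simp: safe_prog_def)
  qed
  then show ?thesis using sP dok R9_2 by (simp add: safe_prog_Diff)
next
  case (R9_3 C X)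
  then show ?thesis using sP dok by (simp add: safe_prog_Diff)
next
  case (R9_4 C h hs G1 t X G2)
  have "safe_clause M (Clause h hs (G1 @ [Neq (V X) t] @ G2))"
    by (rule safe_R9_4) (use R9_4 sP in \<open>auto simp: safe_prog_def\<close>)
  then show ?thesis using sP dok R9_4 by (simp add: safe_prog_Diff safe_prog_def)
next
  case (R9_5 C h hs G1 X t1 G2 t2 G3 L1 L2 \<rho>)
  have sC: "safe_clause M (Clause h hs ((G1 @ [Neq (V X) t1] @ G2) @ [Neq (V X) t2] @ G3))"
    using R9_5 sP by (auto simp: safe_prog_def)
  have "safe_clause M (Clause h hs ((G1 @ [Neq (V X) t1] @ G2) @ G3))" by (rule safe_remove[OF sC])
  then show ?thesis using sP dok R9_5 by (simp add: safe_prog_Diff safe_prog_def)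
qed

theorem proposition3:
  assumes "tseq True M P Df n"
    and "mode_for M (P 0 \<union> Df n)"
    and "safe_prog M (P 0 \<union> Df n)"
  shows "\<forall>k\<le>n. safe_prog M (P k)"
proof -
  have D0: "Df 0 = {}" and st: "\<And>k. k < n \<Longrightarrow> tstep True M (P 0) (\<Union>j\<le>k. ppreds (P j)) (Df k) (P k) (Df (Suc k)) (P (Suc k))"
    using assms(1) unfolding tseq_def by auto
  have sDn: "safe_prog M (Df n)" and sP0: "safe_prog M (P 0)" using assms(3) by auto
  have mono: "Df k \<subseteq> Df n" if "k \<le> n" for k
    using that
  proof (induction rule: dec_induct)
    case base then show ?case by simp
  next
    case (step i)
    then show ?case using tstep_Df_mono[OF st[of i]] by blast
  qed
  have "k \<le> n \<longrightarrow> safe_prog M (P k) \<and> defs_ok (Df k)" for k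
  proof (induction k)
    case 0 then show ?case using sP0 D0 by (simp add: defs_ok_def)
  next
    case (Suc k)
    show ?case
    proof
      assume k: "Suc k \<le> n"
      then have IH: "safe_prog M (P k)" "defs_ok (Df k)" using Suc by auto
      have "safe_prog M (Df (Suc k))" using safe_prog_subset[OF sDn mono[OF k]] .
      then show "safe_prog M (P (Suc k)) \<and> defs_ok (Df (Suc k))"
        using step_safe[OF st[of k] IH(1) _ IH(2)] k by simp
    qed
  qed
  then show ?thesis by blast
qed

end
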